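(* Let $n\geq 2$ and let $R$ be the unital associative ring $\langle x,y \mid x^n=0,\ y^n=0,\ xy+y^{n-1}x^{n-1}=1\rangle$. For $0\leq i,j<n$ put $a_{i,j}=y^ix^j-y^{i+1}x^{j+1}\in R$. Then for all $0\leq i,j,p,q<n$ we have $a_{i,j}a_{p,q}=0$ if $j\neq p$ and $a_{i,j}a_{p,q}=a_{i,q}$ if $j=p$. Moreover $$1=\sum_{i=0}^{n-1}a_{i,i},\qquad x=\sum_{i=0}^{n-2}a_{i,i+1},\qquad y=\sum_{i=0}^{n-2}a_{i+1,i}.$$
   Context: $R$ denotes the quotient of the free unital associative ring $\mathbb{Z}\langle x,y\rangle$ by the two-sided ideal generated by $x^n$, $y^n$ and $xy+y^{n-1}x^{n-1}-1$; $x^0=y^0=1$. *)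

theory Defs
  imports Main
begin

definition aij :: "'a::ring_1 \<Rightarrow> 'a \<Rightarrow> nat \<Rightarrow> nat \<Rightarrow> 'a" where
  "aij x y i j = y ^ i * x ^ j - y ^ (i + 1) * x ^ (j + 1)"

end

theory Submission
  imports Defs
begin

lemma telesc: "(\<Sum>i = 0..k. (g i - g (Suc i)) :: 'a::ab_group_add) = g 0 - g (Suc k)"
  by (induction k) (auto simp: algebra_simps)

lemma lemP:
  fixes x y f :: "'a::ring_1"
  assumes f2: "f * y = 0" and xy: "x * y = 1 - y^m * x^m"
  shows "a < b \<Longrightarrow> b \<le> m \<Longrightarrow> f * x^a * y^b = 0"
proof (induction a arbitrary: b)
  case 0
  then obtain c where b: "b = Suc c" by (cases b) auto
  have "f * y^b = (f*y) * y^c" by (simp add: b mult.assoc)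
  then show ?case using f2 by simp
next
  case (Suc a)
  then obtain c where b: "b = Suc c" by (cases b) auto
  have "f * x^(Suc a) * y^b = f * x^a * (x * y) * y^c"
    by (simp only: b power_Suc2[of x] power_Suc[of y] mult.assoc)
  also have "\<dots> = f * x^a * y^c - (f * x^a * y^m) * x^m * y^c"
    by (simp add: xy algebra_simps)
  also have "f * x^a * y^c = 0" using Suc b by auto
  also have "f * x^a * y^m = 0" using Suc b by auto
  finally show ?case by simp
qed

lemma lemQ:
  fixes x y f :: "'a::ring_1"
  assumes f1: "x * f = 0" and xy: "x * y = 1 - y^m * x^m"
  shows "b < a \<Longrightarrow> a \<le> m \<Longrightarrow> x^a * y^b * f = 0"
proof (induction b arbitrary: a)
  case 0
  then obtain c where a: "a = Suc c" by (cases a) auto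
  have "x^a * y^0 * f = x^c * (x*f)" by (simp add: a power_Suc2 mult.assoc del: power_Suc)
  then show ?case using f1 by simp
next
  case (Suc b)
  then obtain c where a: "a = Suc c" by (cases a) auto
  have "x^a * y^(Suc b) * f = x^c * (x * y) * y^b * f"
    by (simp only: a power_Suc2[of x] power_Suc[of y] mult.assoc)
  also have "\<dots> = x^c * y^b * f - x^c * y^m * (x^m * y^b * f)"
    by (simp add: xy algebra_simps)
  also have "x^c * y^b * f = 0" using Suc a by auto
  also have "x^m * y^b * f = 0" using Suc a by auto
  finally show ?case by simp
qed

lemma lemD:
  fixes x y f :: "'a::ring_1"
  assumes f2: "f * y = 0" and f1: "x * f = 0" and ff: "f * f = f"
    and xy: "x * y = 1 - y^m * x^m"
  shows "j \<le> m \<Longrightarrow> f * x^j * y^j * f = f"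
proof (induction j)
  case 0
  then show ?case using ff by simp
next
  case (Suc j)
  have "f * x^(Suc j) * y^(Suc j) * f = f * x^j * (x * y) * y^j * f"
    by (simp only: power_Suc2[of x] power_Suc[of y] mult.assoc)
  also have "\<dots> = f * x^j * y^j * f - (f * x^j * y^m) * x^m * y^j * f"
    by (simp add: xy algebra_simps)
  also have "f * x^j * y^m = 0" using lemP[OF f2 xy, of j m] Suc by auto
  finally show ?case using Suc by simp
qed

theorem lemma4:
  fixes x y :: "'a::ring_1" and n :: nat
  assumes n2: "n \<ge> 2"
    and hx: "x ^ n = 0" and hy: "y ^ n = 0"
    and hxy: "x * y + y ^ (n - 1) * x ^ (n - 1) = 1"
  shows "(\<forall>i<n. \<forall>j<n. \<forall>p<n. \<forall>q<n.
            aij x y i j * aij x y p q = (if j = p then aij x y i q else 0))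
       \<and> 1 = (\<Sum>i = 0..n-1. aij x y i i)
       \<and> x = (\<Sum>i = 0..n-2. aij x y i (i + 1))
       \<and> y = (\<Sum>i = 0..n-2. aij x y (i + 1) i)"
proof -
  define m where "m = n - 1"
  have nm: "n = Suc m" using n2 by (simp add: m_def)
  define f where "f = 1 - y * x"
  have xy: "x * y = 1 - y^m * x^m" using hxy by (simp add: m_def eq_diff_eq)
  have ex: "y^m * x^m * x = 0"
  proof -
    have "y^m * x^m * x = y^m * x^n" by (simp only: nm power_Suc2 mult.assoc)
    then show ?thesis using hx by simp
  qed
  have ye: "y * (y^m * x^m) = 0" using hy by (simp add: nm mult.assoc[symmetric])
  have f1: "x * f = 0"
  proof -
    have "x * f = x - (x*y)*x" by (simp add: f_def algebra_simps)
    also have "\<dots> = y^m * x^m * x" by (simp add: xy algebra_simps)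
    finally show ?thesis using ex by simp
  qed
  have f2: "f * y = 0"
  proof -
    have "f * y = y - y*(x*y)" by (simp add: f_def algebra_simps)
    also have "\<dots> = y * (y^m * x^m)" by (simp add: xy algebra_simps)
    finally show ?thesis using ye by simp
  qed
  have ff: "f * f = f"
  proof -
    have "f * f = f - (f*y)*x" by (simp add: f_def algebra_simps)
    then show ?thesis using f2 by simp
  qed
  have aijf: "aij x y i j = y^i * f * x^j" for i j
  proof -
    have "y^i * f * x^j = y^i * x^j - (y^i * y) * (x * x^j)"
      by (simp add: f_def algebra_simps)
    then show ?thesis by (simp only: aij_def power_Suc2[of y, symmetric] power_Suc[of x, symmetric] Suc_eq_plus1)
  qed
  have key: "f * x^j * y^p * f = (if j = p then f else 0)" if "j < n" "p < n" for j p
  proof (cases "j = p")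
    case True then show ?thesis using lemD[OF f2 f1 ff xy, of j] that nm by simp
  next
    case False
    show ?thesis
    proof (cases "j < p")
      case True
      then show ?thesis using lemP[OF f2 xy, of j p] that nm by simp
    next
      case False2: False
      then have "p < j" using False by simp
      then show ?thesis using lemQ[OF f1 xy, of p j] that nm False
        by (simp add: mult.assoc)
    qed
  qed
  have A: "\<forall>i<n. \<forall>j<n. \<forall>p<n. \<forall>q<n.
            aij x y i j * aij x y p q = (if j = p then aij x y i q else 0)"
  proof (intro allI impI)
    fix i j p q assume h: "i < n" "j < n" "p < n" "q < n"
    have "aij x y i j * aij x y p q = y^i * (f * x^j * y^p * f) * x^q"
      by (simp add: aijf mult.assoc)
    then show "aij x y i j * aij x y p q = (if j = p then aij x y i q else 0)"
      using key[OF h(2,3)] by (simp add: aijf)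
  qed
  have B: "(\<Sum>i = 0..n-1. aij x y i i) = 1"
    using telesc[of "\<lambda>i. y^i * x^i" m] hx by (simp add: aij_def m_def[symmetric] nm)
  have C: "(\<Sum>i = 0..n-2. aij x y i (i + 1)) = x"
  proof -
    have "(\<Sum>i = 0..n-2. aij x y i (i + 1)) = x - y^(Suc (n-2)) * x^n"
      using telesc[of "\<lambda>i. y^i * x^(Suc i)" "n-2"] n2
      by (simp add: aij_def Suc_diff_Suc numeral_2_eq_2)
    then show ?thesis using hx by simp
  qed
  have D: "(\<Sum>i = 0..n-2. aij x y (i + 1) i) = y"
  proof -
    have "(\<Sum>i = 0..n-2. aij x y (i+1) i) = y - y^n * x^(Suc (n-2))"
      using telesc[of "\<lambda>i. y^(Suc i) * x^i" "n-2"] n2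
      by (simp add: aij_def Suc_diff_Suc numeral_2_eq_2)
    then show ?thesis using hy by simp
  qed
  show ?thesis using A B C D by simp
qed

end
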